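(* Let $X$ be a collectionwise normal space with $\operatorname{ind} X=0$, and let $A$ be a discrete subset of $X$. Then there exists a pairwise disjoint family $\{V_a : a\in A\}$ of clopen subsets of $X$ such that $a\in V_a$ for each $a\in A$ and the set $X\setminus\bigcup_{a\in A}V_a$ is clopen.
   Context: A space $X$ is collectionwise normal if it is $T_1$ and for every discrete family $\{F_s\}_{s\in S}$ of closed subsets of $X$ there is a discrete family $\{V_s\}_{s\in S}$ of open sets with $F_s\subseteq V_s$ for all $s$. A family of subsets is discrete if each point has a neighbourhood meeting at most one member; a subset $D$ is discrete if the family of its singletons is discrete. $\operatorname{ind}$ denotes the small inductive dimension. *)

theory Defs
  imports "HOL-Analysis.Analysis"
begin

definition discrete_family :: "'a topology \<Rightarrow> 'i set \<Rightarrow> ('i \<Rightarrow> 'a set) \<Rightarrow> bool" where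
  "discrete_family X S F \<longleftrightarrow>
     (\<forall>x\<in>topspace X. \<exists>U. openin X U \<and> x \<in> U \<and>
        (\<forall>s\<in>S. \<forall>t\<in>S. F s \<inter> U \<noteq> {} \<and> F t \<inter> U \<noteq> {} \<longrightarrow> s = t))"

definition discrete_subset :: "'a topology \<Rightarrow> 'a set \<Rightarrow> bool" where
  "discrete_subset X D \<longleftrightarrow> D \<subseteq> topspace X \<and> discrete_family X D (\<lambda>d. {d})"

definition collectionwise_normal :: "'a topology \<Rightarrow> bool" where
  "collectionwise_normal X \<longleftrightarrow> t1_space X \<and>
     (\<forall>\<F>. (\<forall>F\<in>\<F>. closedin X F) \<and> discrete_family X \<F> id \<longrightarrow>
        (\<exists>V. (\<forall>F\<in>\<F>. openin X (V F) \<and> F \<subseteq> V F) \<and> discrete_family X \<F> V))"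

text \<open>Small inductive dimension zero: X is nonempty (ind of the empty space is -1) and
every point has arbitrarily small open neighbourhoods with empty boundary, i.e. clopen ones.\<close>
definition ind_zero :: "'a topology \<Rightarrow> bool" where
  "ind_zero X \<longleftrightarrow> topspace X \<noteq> {} \<and>
     (\<forall>x\<in>topspace X. \<forall>U. openin X U \<and> x \<in> U \<longrightarrow>
        (\<exists>V. openin X V \<and> X frontier_of V = {} \<and> x \<in> V \<and> V \<subseteq> U))"

end

theory Submission
  imports Defs
begin

theorem mainTheorem4:
  fixes X :: "'a topology" and A :: "'a set"
  assumes "collectionwise_normal X" and "ind_zero X" and "discrete_subset X A"
  shows "\<exists>V :: 'a \<Rightarrow> 'a set.
           (\<forall>a\<in>A. openin X (V a) \<and> closedin X (V a) \<and> a \<in> V a) \<and>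
           (\<forall>a\<in>A. \<forall>b\<in>A. a \<noteq> b \<longrightarrow> V a \<inter> V b = {}) \<and>
           openin X (topspace X - (\<Union>a\<in>A. V a)) \<and>
           closedin X (topspace X - (\<Union>a\<in>A. V a))"
proof -
  have t1: "t1_space X" and cw: "\<And>\<F>. (\<forall>F\<in>\<F>. closedin X F) \<and> discrete_family X \<F> id \<Longrightarrow>
        (\<exists>V. (\<forall>F\<in>\<F>. openin X (V F) \<and> F \<subseteq> V F) \<and> discrete_family X \<F> V)"
    using assms(1) unfolding collectionwise_normal_def by blast+
  have Asub: "A \<subseteq> topspace X" and dA: "discrete_family X A (\<lambda>d. {d})"
    using assms(3) unfolding discrete_subset_def by auto
  define \<F> where "\<F> = (\<lambda>a. {a}) ` A"
  have "\<forall>F\<in>\<F>. closedin X F" unfolding \<F>_def using Asub by (auto intro: closedin_t1_singleton[OF t1])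
  moreover have "discrete_family X \<F> id"
    unfolding discrete_family_def
  proof
    fix x assume "x \<in> topspace X"
    then obtain U where U: "openin X U" "x \<in> U"
      "\<forall>s\<in>A. \<forall>t\<in>A. {s} \<inter> U \<noteq> {} \<and> {t} \<inter> U \<noteq> {} \<longrightarrow> s = t"
      using dA unfolding discrete_family_def by blast
    show "\<exists>U. openin X U \<and> x \<in> U \<and> (\<forall>s\<in>\<F>. \<forall>t\<in>\<F>. id s \<inter> U \<noteq> {} \<and> id t \<inter> U \<noteq> {} \<longrightarrow> s = t)"
      using U unfolding \<F>_def by (intro exI[of _ U]) auto
  qed
  ultimately have "\<exists>V. (\<forall>F\<in>\<F>. openin X (V F) \<and> F \<subseteq> V F) \<and> discrete_family X \<F> V"
    by (intro cw conjI)
  then obtain W where W: "\<forall>F\<in>\<F>. openin X (W F) \<and> F \<subseteq> W F" and dW: "discrete_family X \<F> W"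
    by blast
  define U where "U a = W {a}" for a
  have Uo: "\<And>a. a \<in> A \<Longrightarrow> openin X (U a) \<and> a \<in> U a" 
  proof -
    fix a assume "a \<in> A"
    then have "{a} \<in> \<F>" unfolding \<F>_def by blast
    then have "openin X (W {a}) \<and> {a} \<subseteq> W {a}" using W by blast
    then show "openin X (U a) \<and> a \<in> U a" unfolding U_def by simp
  qed
  have dU: "\<forall>x\<in>topspace X. \<exists>T. openin X T \<and> x \<in> T \<and>
        (\<forall>s\<in>A. \<forall>t\<in>A. U s \<inter> T \<noteq> {} \<and> U t \<inter> T \<noteq> {} \<longrightarrow> s = t)"
  proof
    fix x assume "x \<in> topspace X"
    obtain T where T: "openin X T" "x \<in> T"
      "\<forall>s\<in>\<F>. \<forall>t\<in>\<F>. W s \<inter> T \<noteq> {} \<and> W t \<inter> T \<noteq> {} \<longrightarrow> s = t"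
      using bspec[OF dW[unfolded discrete_family_def] \<open>x \<in> topspace X\<close>] by blast
    show "\<exists>T. openin X T \<and> x \<in> T \<and>
        (\<forall>s\<in>A. \<forall>t\<in>A. U s \<inter> T \<noteq> {} \<and> U t \<inter> T \<noteq> {} \<longrightarrow> s = t)"
    proof (intro exI[of _ T] conjI ballI impI)
      fix s t assume st: "s \<in> A" "t \<in> A" "U s \<inter> T \<noteq> {} \<and> U t \<inter> T \<noteq> {}"
      have "{s} \<in> \<F>" "{t} \<in> \<F>" using st(1,2) unfolding \<F>_def by auto
      moreover have "W {s} \<inter> T \<noteq> {} \<and> W {t} \<inter> T \<noteq> {}" using st(3) by (simp add: U_def)
      ultimately have "{s} = {t}" using T(3) by (meson)
      then show "s = t" by simp
    next
      show "openin X T" by (rule T(1))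
    next
      show "x \<in> T" by (rule T(2))
    qed
  qed
  have "\<forall>a\<in>A. \<exists>V. openin X V \<and> X frontier_of V = {} \<and> a \<in> V \<and> V \<subseteq> U a"
    using assms(2) Uo Asub unfolding ind_zero_def by blast
  then obtain V where V: "\<And>a. a \<in> A \<Longrightarrow> openin X (V a) \<and> X frontier_of (V a) = {} \<and> a \<in> V a \<and> V a \<subseteq> U a"
    by metis
  have Vc: "\<And>a. a \<in> A \<Longrightarrow> closedin X (V a)"
  proof -
    fix a assume a: "a \<in> A"
    have "V a \<subseteq> topspace X" using V[OF a] by (simp add: openin_subset)
    then show "closedin X (V a)" using V[OF a] frontier_of_eq_empty by blast
  qed
  have dV: "\<forall>x\<in>topspace X. \<exists>T. openin X T \<and> x \<in> T \<and>
        (\<forall>s\<in>A. \<forall>t\<in>A. V s \<inter> T \<noteq> {} \<and> V t \<inter> T \<noteq> {} \<longrightarrow> s = t)"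
  proof
    fix x assume "x \<in> topspace X"
    obtain T where T: "openin X T" "x \<in> T"
      "\<forall>s\<in>A. \<forall>t\<in>A. U s \<inter> T \<noteq> {} \<and> U t \<inter> T \<noteq> {} \<longrightarrow> s = t"
      using bspec[OF dU \<open>x \<in> topspace X\<close>] by blast
    show "\<exists>T. openin X T \<and> x \<in> T \<and>
        (\<forall>s\<in>A. \<forall>t\<in>A. V s \<inter> T \<noteq> {} \<and> V t \<inter> T \<noteq> {} \<longrightarrow> s = t)"
    proof (intro exI[of _ T] conjI ballI impI)
      fix s t assume st: "s \<in> A" "t \<in> A" "V s \<inter> T \<noteq> {} \<and> V t \<inter> T \<noteq> {}"
      have "V s \<subseteq> U s" "V t \<subseteq> U t" using V st(1,2) by auto
      then have "U s \<inter> T \<noteq> {} \<and> U t \<inter> T \<noteq> {}" using st(3) by blast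
      then show "s = t" using T(3) st(1,2) by blast
    qed (use T in auto)
  qed
  have disj: "\<forall>a\<in>A. \<forall>b\<in>A. a \<noteq> b \<longrightarrow> V a \<inter> V b = {}"
  proof (intro ballI impI)
    fix a b assume ab: "a \<in> A" "b \<in> A" "a \<noteq> b"
    show "V a \<inter> V b = {}"
    proof (rule ccontr)
      assume "V a \<inter> V b \<noteq> {}"
      then obtain x where x: "x \<in> V a" "x \<in> V b" by blast
      then have "x \<in> topspace X" using V[OF ab(1)] openin_subset by auto
      obtain T where T: "openin X T" "x \<in> T"
        "\<forall>s\<in>A. \<forall>t\<in>A. V s \<inter> T \<noteq> {} \<and> V t \<inter> T \<noteq> {} \<longrightarrow> s = t"
        using bspec[OF dV \<open>x \<in> topspace X\<close>] by blast
      then show False using x ab by blast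
    qed
  qed
  have op: "openin X (\<Union>a\<in>A. V a)"
    by (rule openin_Union) (use V in blast)
  have cl: "closedin X (\<Union>a\<in>A. V a)"
    unfolding closedin_def
  proof
    show "(\<Union>a\<in>A. V a) \<subseteq> topspace X"
      using V openin_subset by (meson UN_least)
    show "openin X (topspace X - (\<Union>a\<in>A. V a))"
    proof (subst openin_subopen, intro ballI)
      fix x assume x: "x \<in> topspace X - (\<Union>a\<in>A. V a)"
      then have "x \<in> topspace X" by blast
      obtain T where T: "openin X T" "x \<in> T"
        "\<forall>s\<in>A. \<forall>t\<in>A. V s \<inter> T \<noteq> {} \<and> V t \<inter> T \<noteq> {} \<longrightarrow> s = t"
        using bspec[OF dV \<open>x \<in> topspace X\<close>] by blast
      show "\<exists>T'. openin X T' \<and> x \<in> T' \<and> T' \<subseteq> topspace X - (\<Union>a\<in>A. V a)"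
      proof (cases "\<exists>b\<in>A. V b \<inter> T \<noteq> {}")
        case True
        then obtain b where b: "b \<in> A" "V b \<inter> T \<noteq> {}" by blast
        have o: "openin X (T - V b)" using T(1) Vc[OF b(1)] by (rule openin_diff)
        have "T - V b \<subseteq> topspace X - (\<Union>a\<in>A. V a)"
        proof
          fix y assume y: "y \<in> T - V b"
          have "y \<in> topspace X" using y openin_subset[OF T(1)] by blast
          moreover have "y \<notin> V a" if a: "a \<in> A" for a
          proof
            assume "y \<in> V a"
            then have "V a \<inter> T \<noteq> {}" using y by blast
            then have "a = b" using T(3) a b by blast
            then show False using y \<open>y \<in> V a\<close> by blast
          qed
          ultimately show "y \<in> topspace X - (\<Union>a\<in>A. V a)" by blast
        qed
        moreover have "x \<in> T - V b" using x T(2) b(1) by blast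
        ultimately show ?thesis using o by blast
      next
        case False
        have "T \<subseteq> topspace X" using T(1) by (rule openin_subset)
        moreover have "T \<inter> (\<Union>a\<in>A. V a) = {}" using False by blast
        ultimately have "T \<subseteq> topspace X - (\<Union>a\<in>A. V a)" by blast
        then show ?thesis using T(1,2) by blast
      qed
    qed
  qed
  have c1: "\<forall>a\<in>A. openin X (V a) \<and> closedin X (V a) \<and> a \<in> V a"
    using V Vc by simp
  have c3: "openin X (topspace X - (\<Union>a\<in>A. V a))"
    using cl by (simp add: openin_diff)
  have c4: "closedin X (topspace X - (\<Union>a\<in>A. V a))"
    using op by (simp add: closedin_diff)
  show ?thesis using c1 disj c3 c4 by (intro exI[of _ V] conjI)
qed

end
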